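(* Let $\pi_\cap:\mathcal{Y}_{Q(\mathbf{e}_d)}(\mathbb{R})\to\mathcal{X}_{Q(\mathbf{e}_d)}(\mathbb{R})$ be $\pi_\cap(L,P,\mathbf{v})=(L\cap P,\mathbf{v})$. Then $(\pi_\cap)_*\mu_{\mathcal{Y}}=\mu_{\mathcal{X}}$.
   Context: $d\ge4$, $Q(\mathbf{x})=\mathbf{x}^tM\mathbf{x}$ with $M\in M_d(\mathbb{Z})$ symmetric, $\det M\ne0$, $Q(\mathbf{e}_d)>0$, $\{h\in\mathrm{SO}_Q(\mathbb{R}):h\mathbf{e}_d=\mathbf{e}_d\}$ compact, $\mathrm{SO}_Q(R)=\{h\in\mathrm{SL}_d(R):h^tMh=M\}$. $\theta(g)=(g^t)^{-1}$, $\tau(g)=\theta(g)\mathbf{e}_d$, $\mathcal{H}_s(\mathbb{R})=\{Q=s\}$. $\mathrm{ASL}_{d-1}$: matrices $\begin{pmatrix}m&\mathbf{w}\\ \mathbf{0}&1\end{pmatrix}$, $m\in\mathrm{SL}_{d-1}$; $U=\{\begin{pmatrix}I_{d-1}&\mathbf{w}\\ \mathbf{0}&1\end{pmatrix}\}$. $\mathcal{Y}(\mathbb{R})$: triples $(L,P,\mathbf{v})$, $L$ unimodular lattice in $\mathbb{R}^d$, $P$ hyperplane with $L\cap P$ a lattice in $P$, $\mathbf{v}\perp P$, $\|\mathbf{v}\|$ equal to the covolume of $L\cap P$ in $P$; identified with $\mathrm{SL}_d(\mathbb{R})/\mathrm{ASL}_{d-1}(\mathbb{Z})$ via $g\mapsto(g\mathbb{Z}^d,\mathrm{Span}\{g\mathbf{e}_1,..,g\mathbf{e}_{d-1}\},\tau(g))$.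 $\mathcal{X}(\mathbb{R})$: pairs $(\Lambda,\mathbf{v})$, $\Lambda$ rank $d-1$ discrete subgroup, $\mathbf{v}\perp\Lambda$, $\|\mathbf{v}\|=\mathrm{covol}(\Lambda)$; identified with $\mathrm{SL}_d(\mathbb{R})/\mathrm{ASL}_{d-1}(\mathbb{Z})U$ via $g\mapsto(\mathrm{Span}_\mathbb{Z}\{g\mathbf{e}_1,..,g\mathbf{e}_{d-1}\},\tau(g))$. $\mathcal{Y}_s(\mathbb{R}),\mathcal{X}_s(\mathbb{R})$ are the subsets with $Q(\mathbf{v})=s$. Measures: $m_{\mathrm{SO}_Q(\mathbb{R})}$ Haar with $\int\varphi=\int_{\mathrm{SO}_Q(\mathbb{R})/\mathrm{SO}_Q(\mathbb{Z})}\sum_\gamma\varphi(x\gamma)d\mu$ ($\mu$ invariant probability), $\mu_{\mathcal{H}}$ its pushforward to $\mathcal{H}_{Q(\mathbf{e}_d)}(\mathbb{R})$ under $\rho\mapsto\rho^{-1}\mathbf{e}_d$; $m_{Y_{d-1}}$ the invariant probability on $\mathrm{ASL}_{d-1}(\mathbb{R})/\mathrm{ASL}_{d-1}(\mathbb{Z})$, $m_{X_{d-1}}$ its pushforward to $\mathrm{ASL}_{d-1}(\mathbb{R})/\mathrm{ASL}_{d-1}(\mathbb{Z})U$; with $g_{\mathbf{v}}\in\mathrm{SL}_d(\mathbb{R})$ any matrix satisfying $\tau(g_{\mathbf{v}})=\mathbf{v}$, $\mu_{\mathcal{Y}}(f)=\int\int f(g_{\mathbf{v}}x)\,dm_{Y_{d-1}}(x)\,d\mu_{\mathcal{H}}(\mathbf{v})$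 and $\mu_{\mathcal{X}}(f)=\int\int f(g_{\mathbf{v}}x)\,dm_{X_{d-1}}(x)\,d\mu_{\mathcal{H}}(\mathbf{v})$ (in the coset identifications). *)

theory Defs
  imports "HOL-Analysis.Analysis" "HOL-Probability.Probability_Measure"
begin

text \<open>Vectors in R^d are (real, 'd) vec, matrices ((real, 'd) vec, 'd) vec; the index type is linearly
ordered and its largest element plays the role of the last coordinate d.\<close>


definition lastI :: "('d::{finite,linorder})" where
  "lastI = Max UNIV"

definition ed :: "(real, 'd::{finite,linorder}) vec" where
  "ed = axis lastI 1"

definition QF :: "((real, 'd::finite) vec, 'd) vec \<Rightarrow> (real, 'd) vec \<Rightarrow> real" where
  "QF M x = x \<bullet> (M *v x)"

definition int_mat :: "((real, 'd::finite) vec, 'd) vec \<Rightarrow> bool" where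
  "int_mat g \<longleftrightarrow> (\<forall>i j. g$i$j \<in> \<int>)"

definition SLd :: "(((real, 'd::finite) vec, 'd) vec) set" where
  "SLd = {g. det g = 1}"

definition SO_R :: "((real, 'd::finite) vec, 'd) vec \<Rightarrow> (((real, 'd) vec, 'd) vec) set" where
  "SO_R M = {h. det h = 1 \<and> transpose h ** M ** h = M}"

definition SO_Z :: "((real, 'd::finite) vec, 'd) vec \<Rightarrow> (((real, 'd) vec, 'd) vec) set" where
  "SO_Z M = {h \<in> SO_R M. int_mat h}"

definition theta :: "((real, 'd::finite) vec, 'd) vec \<Rightarrow> ((real, 'd) vec, 'd) vec" where
  "theta g = transpose (matrix_inv g)"

definition tau :: "((real, 'd::{finite,linorder}) vec, 'd) vec \<Rightarrow> (real, 'd) vec" where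
  "tau g = theta g *v ed"

text \<open>ASL_{d-1}(R), ASL_{d-1}(Z) and U, embedded in SL_d.\<close>
definition ASL_R :: "(((real, 'd::{finite,linorder}) vec, 'd) vec) set" where
  "ASL_R = {g. det g = 1 \<and> (\<forall>j. g$lastI$j = (if j = lastI then 1 else 0))}"

definition ASL_Z :: "(((real, 'd::{finite,linorder}) vec, 'd) vec) set" where
  "ASL_Z = {g \<in> ASL_R. int_mat g}"

definition U_grp :: "(((real, 'd::{finite,linorder}) vec, 'd) vec) set" where
  "U_grp = {g \<in> ASL_R. \<forall>i j. i \<noteq> lastI \<and> j \<noteq> lastI \<longrightarrow> g$i$j = (if i = j then 1 else 0)}"

definition lmul :: "((real, 'd::finite) vec, 'd) vec \<Rightarrow> (((real, 'd) vec, 'd) vec) set \<Rightarrow> (((real, 'd) vec, 'd) vec) set" where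
  "lmul g C = (\<lambda>y. g ** y) ` C"

definition setmul :: "(((real, 'd::finite) vec, 'd) vec) set \<Rightarrow> (((real, 'd) vec, 'd) vec) set \<Rightarrow> (((real, 'd) vec, 'd) vec) set" where
  "setmul A B = {a ** b | a b. a \<in> A \<and> b \<in> B}"

definition quot :: "(((real, 'd::finite) vec, 'd) vec) set \<Rightarrow> (((real, 'd) vec, 'd) vec) set \<Rightarrow> (((real, 'd) vec, 'd) vec) set set" where
  "quot G H = {lmul g H | g. g \<in> G}"

text \<open>Quotient measurable structure on G/H: a set of cosets is measurable iff its
preimage under the projection G \<rightarrow> G/H (i.e. its union) is Borel.\<close>
definition quot_measure :: "(((real, 'd::finite) vec, 'd) vec) set \<Rightarrow> (((real, 'd) vec, 'd) vec) set \<Rightarrow> (((real, 'd) vec, 'd) vec) set measure" where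
  "quot_measure G H = sigma (quot G H) {A. A \<subseteq> quot G H \<and> \<Union>A \<in> sets borel}"

definition inv_prob_quot :: "(((real, 'd::finite) vec, 'd) vec) set \<Rightarrow> (((real, 'd) vec, 'd) vec) set \<Rightarrow> (((real, 'd) vec, 'd) vec) set measure \<Rightarrow> bool" where
  "inv_prob_quot G H \<mu> \<longleftrightarrow> prob_space \<mu> \<and> sets \<mu> = sets (quot_measure G H) \<and>
     (\<forall>h\<in>G. distr \<mu> (quot_measure G H) (lmul h) = \<mu>)"

text \<open>m_{Y_{d-1}}: the invariant probability on ASL_{d-1}(R)/ASL_{d-1}(Z)
(the fallback branch is only a totalisation; such a measure exists).\<close>
definition m_Yd :: "(((real, 'd::{finite,linorder}) vec, 'd) vec) set measure" where
  "m_Yd = (if \<exists>\<mu> :: (((real, 'd) vec, 'd) vec) set measure. inv_prob_quot ASL_R ASL_Z \<mu> then SOME \<mu>. inv_prob_quot ASL_R ASL_Z \<mu>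
           else null_measure (quot_measure ASL_R ASL_Z))"

definition m_Xd :: "(((real, 'd::{finite,linorder}) vec, 'd) vec) set measure" where
  "m_Xd = distr m_Yd (quot_measure ASL_R (setmul ASL_Z U_grp)) (\<lambda>C. setmul C U_grp)"

text \<open>Haar measure on SO_Q(R), normalised by the unfolding formula with respect to the
invariant probability on SO_Q(R)/SO_Q(Z); note that for x in G,
sum over gamma of phi(x gamma) is the sum of phi over the coset x SO_Q(Z).\<close>
definition haar_SO :: "((real, 'd::finite) vec, 'd) vec \<Rightarrow> (((real, 'd) vec, 'd) vec) measure \<Rightarrow> bool" where
  "haar_SO M m \<longleftrightarrow> sets m = sets borel \<and> emeasure m (UNIV - SO_R M) = 0 \<and>
     (\<forall>h\<in>SO_R M. distr m borel (\<lambda>g. h ** g) = m) \<and>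
     (\<exists>\<nu>. inv_prob_quot (SO_R M) (SO_Z M) \<nu> \<and>
        (\<forall>\<phi> \<in> borel_measurable borel.
           (\<integral>\<^sup>+ g. \<phi> g \<partial>m) = (\<integral>\<^sup>+ C. (\<integral>\<^sup>+ y. \<phi> y \<partial>count_space C) \<partial>\<nu>)))"

definition mu_H :: "((real, 'd::{finite,linorder}) vec, 'd) vec \<Rightarrow> ((real, 'd) vec) measure" where
  "mu_H M = distr (SOME m. haar_SO M m) borel (\<lambda>\<rho>. matrix_inv \<rho> *v ed)"

definition gv :: "(real, 'd::{finite,linorder}) vec \<Rightarrow> ((real, 'd) vec, 'd) vec" where
  "gv v = (if \<exists>g. det g = 1 \<and> tau g = v then SOME g. det g = 1 \<and> tau g = v else mat 1)"

definition Zd :: "((real, 'd::finite) vec) set" where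
  "Zd = {z. \<forall>i. z$i \<in> \<int>}"

text \<open>The identifications SL_d(R)/ASL_{d-1}(Z) \<rightarrow> Y(R), SL_d(R)/ASL_{d-1}(Z)U \<rightarrow> X(R),
evaluated at a representative g.\<close>
definition Y_of :: "((real, 'd::{finite,linorder}) vec, 'd) vec \<Rightarrow> ((real, 'd) vec) set \<times> ((real, 'd) vec) set \<times> (real, 'd) vec" where
  "Y_of g = ((\<lambda>z. g *v z) ` Zd, span {g *v axis i 1 | i. i \<noteq> lastI}, tau g)"

definition int_span_first :: "((real, 'd::{finite,linorder}) vec, 'd) vec \<Rightarrow> ((real, 'd) vec) set" where
  "int_span_first g = {x. \<exists>c. (\<forall>i. c i \<in> \<int>) \<and>
       x = (\<Sum>i\<in>{i. i \<noteq> lastI}. c i *\<^sub>R (g *v axis i 1))}"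

definition X_of :: "((real, 'd::{finite,linorder}) vec, 'd) vec \<Rightarrow> ((real, 'd) vec) set \<times> (real, 'd) vec" where
  "X_of g = (int_span_first g, tau g)"

definition rep :: "'a set \<Rightarrow> 'a" where
  "rep C = (SOME x. x \<in> C)"

text \<open>mu_Y and mu_X as functionals on nonnegative functions on Y(R), X(R).\<close>
definition mu_Y :: "((real, 'd::{finite,linorder}) vec, 'd) vec \<Rightarrow> (((real, 'd) vec) set \<times> ((real, 'd) vec) set \<times> (real, 'd) vec \<Rightarrow> ennreal) \<Rightarrow> ennreal" where
  "mu_Y M f = (\<integral>\<^sup>+ v. (\<integral>\<^sup>+ C. f (Y_of (gv v ** rep C)) \<partial>m_Yd) \<partial>mu_H M)"

definition mu_X :: "((real, 'd::{finite,linorder}) vec, 'd) vec \<Rightarrow> (((real, 'd) vec) set \<times> (real, 'd) vec \<Rightarrow> ennreal) \<Rightarrow> ennreal" where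
  "mu_X M f = (\<integral>\<^sup>+ v. (\<integral>\<^sup>+ C. f (X_of (gv v ** rep C)) \<partial>m_Xd) \<partial>mu_H M)"

definition pi_cap :: "((real, 'd) vec) set \<times> ((real, 'd) vec) set \<times> (real, 'd) vec \<Rightarrow> ((real, 'd) vec) set \<times> (real, 'd) vec" where
  "pi_cap y = (case y of (L, P, v) \<Rightarrow> (L \<inter> P, v))"

end

theory Submission
  imports Defs
begin

type_synonym 'd mt = "((real,'d) vec,'d) vec"

lemma cont_det: "continuous_on UNIV (det :: ('d::finite) mt \<Rightarrow> real)"
proof -
  have c: "continuous_on UNIV (\<lambda>g::'d mt. g$i$j)" for i j
    by (intro linear_continuous_on bounded_linear_compose[OF bounded_linear_vec_nth bounded_linear_vec_nth])
  show ?thesis unfolding det_def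
    by (intro continuous_intros c)
qed

lemma lin_mul: "continuous_on UNIV (\<lambda>y::('d::finite) mt. G ** y)"
  apply (rule linear_continuous_on)
  apply (rule linear_conv_bounded_linear[THEN iffD1])
  apply (rule linearI)
  apply (simp add: matrix_add_ldistrib)
  by (simp add: vec_eq_iff matrix_matrix_mult_def sum_distrib_left algebra_simps)

lemma ifmul: "(if P then 1 else 0) * (y::real) = (if P then y else 0)" by simp

definition LP :: "('d::{finite,linorder}) mt \<Rightarrow> bool" where
  "LP g \<longleftrightarrow> (\<forall>x. (g *v x)$lastI = x$lastI)"

lemma axis_col: "((g::('d::finite) mt) *v axis j 1)$i = g$i$j"
  by (simp add: matrix_vector_mult_def axis_def if_distrib cong: if_cong)

lemma ASL_R_iff: fixes g :: "'d::{finite,linorder} mt" shows "g \<in> ASL_R \<longleftrightarrow> det g = 1 \<and> LP g"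
proof -
  have "(\<forall>j. g$lastI$j = (if j = lastI then 1 else 0)) \<longleftrightarrow> LP g"
  proof
    assume h: "\<forall>j. g$lastI$j = (if j = lastI then 1 else 0)"
    show "LP g" unfolding LP_def
      by (simp add: matrix_vector_mult_def h ifmul)
  next
    assume "LP g"
    then have "(g *v axis j 1)$lastI = (axis j 1 :: (real,_) vec)$lastI" for j unfolding LP_def by blast
    then show "\<forall>j. g$lastI$j = (if j = lastI then 1 else 0)"
      unfolding axis_col by (auto simp: axis_def)
  qed
  then show ?thesis unfolding ASL_R_def by auto
qed

lemma U_iff: fixes g :: "'d::{finite,linorder} mt" shows "g \<in> U_grp \<longleftrightarrow> det g = 1 \<and> LP g \<and> (\<forall>x. x$lastI = 0 \<longrightarrow> g *v x = x)"
proof -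
  have "g \<in> U_grp \<longleftrightarrow> g \<in> ASL_R \<and> (\<forall>i j. i \<noteq> lastI \<and> j \<noteq> lastI \<longrightarrow> g$i$j = (if i = j then 1 else 0))"
    unfolding U_grp_def by auto
  moreover have "g \<in> ASL_R \<Longrightarrow> (\<forall>i j. i \<noteq> lastI \<and> j \<noteq> lastI \<longrightarrow> g$i$j = (if i = j then 1 else 0))
     \<longleftrightarrow> (\<forall>x. x$lastI = 0 \<longrightarrow> g *v x = x)"
  proof
    assume A: "g \<in> ASL_R" and h: "\<forall>i j. i \<noteq> lastI \<and> j \<noteq> lastI \<longrightarrow> g$i$j = (if i = j then 1 else 0)"
    show "\<forall>x. x$lastI = 0 \<longrightarrow> g *v x = x"
    proof (intro allI impI)
      fix x :: "(real,'d) vec" assume x0: "x$lastI = 0"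
      show "g *v x = x"
      proof (subst vec_eq_iff, intro allI)
        fix i
        show "(g *v x)$i = x$i"
        proof (cases "i = lastI")
          case True
          then show ?thesis using A ASL_R_iff LP_def by blast
        next
          case False
          have "(g *v x)$i = (\<Sum>j\<in>UNIV. g$i$j * x$j)" by (simp add: matrix_vector_mult_def)
          also have "\<dots> = (\<Sum>j\<in>UNIV. (if j = i then x$j else 0))"
            apply (rule sum.cong[OF refl])
            subgoal for j using h False x0 by (cases "j = lastI") auto
            done
          also have "\<dots> = x$i" by simp
          finally show ?thesis .
        qed
      qed
    qed
  next
    assume A: "g \<in> ASL_R" and h: "\<forall>x. x$lastI = 0 \<longrightarrow> g *v x = x"
    show "\<forall>i j. i \<noteq> lastI \<and> j \<noteq> lastI \<longrightarrow> g$i$j = (if i = j then 1 else 0)"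
    proof (intro allI impI)
      fix i j :: 'd assume ij: "i \<noteq> lastI \<and> j \<noteq> lastI"
      have "(axis j (1::real))$lastI = 0" using ij by (auto simp add: axis_def)
      then have "g *v axis j 1 = axis j (1::real)" using h by blast
      then have "(g *v axis j 1)$i = (axis j (1::real))$i" by simp
      then show "g$i$j = (if i = j then 1 else 0)" unfolding axis_col by (simp add: axis_def)
    qed
  qed
  ultimately show ?thesis using ASL_R_iff by blast
qed

lemma int_mat_iff: fixes g :: "'d::finite mt" shows "int_mat g \<longleftrightarrow> (\<forall>z\<in>Zd. g *v z \<in> Zd)"
proof
  assume "int_mat g"
  then show "\<forall>z\<in>Zd. g *v z \<in> Zd"
    unfolding int_mat_def Zd_def by (auto simp: matrix_vector_mult_def intro!: Ints_sum Ints_mult)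
next
  assume h: "\<forall>z\<in>Zd. g *v z \<in> Zd"
  have "(axis j 1 :: (real,'d) vec) \<in> Zd" for j unfolding Zd_def by (simp add: axis_def)
  then have "(g *v axis j 1)$i \<in> \<int>" for i j using h unfolding Zd_def by blast
  then show "int_mat g" unfolding int_mat_def by (simp add: axis_col)
qed

lemma inv_facts: fixes g :: "'d::finite mt" assumes "det g \<noteq> 0"
  shows "g ** matrix_inv g = mat 1" "matrix_inv g ** g = mat 1"
proof -
  have "invertible g" using assms invertible_det_nz by blast
  then have "\<exists>A'. g ** A' = mat 1 \<and> A' ** g = mat 1" unfolding invertible_def by blast
  then have "g ** matrix_inv g = mat 1 \<and> matrix_inv g ** g = mat 1"
    unfolding matrix_inv_def by (rule someI_ex)
  then show "g ** matrix_inv g = mat 1" "matrix_inv g ** g = mat 1" by auto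
qed

lemma inv_unique: fixes A :: "'d::finite mt" assumes "A ** B = mat 1" "B ** A = mat 1"
  shows "matrix_inv A = B"
proof -
  have "det A \<noteq> 0" using assms invertible_det_nz invertible_def by blast
  note i = inv_facts[OF this]
  have "matrix_inv A = matrix_inv A ** (A ** B)" using assms by simp
  also have "\<dots> = (matrix_inv A ** A) ** B" by (simp add: matrix_mul_assoc)
  also have "\<dots> = B" using i by simp
  finally show ?thesis .
qed

lemma det_inv1: fixes g :: "'d::finite mt" assumes "det g = 1" shows "det (matrix_inv g) = 1"
proof -
  have "det (g ** matrix_inv g) = 1" using inv_facts[of g] assms by simp
  then show ?thesis using assms by (simp add: det_mul)
qed

lemma LP_mul: "LP a \<Longrightarrow> LP b \<Longrightarrow> LP (a ** b)"
  unfolding LP_def by (simp flip: matrix_vector_mul_assoc)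

lemma LP_inv: fixes g :: "'d::{finite,linorder} mt" assumes "det g \<noteq> 0" "LP g" shows "LP (matrix_inv g)"
  unfolding LP_def
proof
  fix x
  have "(g *v (matrix_inv g *v x))$lastI = (matrix_inv g *v x)$lastI" using assms(2) LP_def by blast
  then show "(matrix_inv g *v x) $ lastI = x $ lastI"
    by (simp add: matrix_vector_mul_assoc inv_facts[OF assms(1)])
qed

lemma det_int: fixes A :: "'d::finite mt" assumes "int_mat A" shows "det A \<in> \<int>"
  using assms unfolding det_def int_mat_def
  by (intro Ints_sum Ints_mult Ints_prod) auto

lemma inv_int: fixes g :: "'d::finite mt" assumes "det g = 1" "int_mat g" shows "int_mat (matrix_inv g)"
  unfolding int_mat_iff
proof
  fix z :: "(real,'d) vec" assume z: "z \<in> Zd"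
  have "g *v (matrix_inv g *v z) = z" by (simp add: matrix_vector_mul_assoc inv_facts assms)
  then have e: "matrix_inv g *v z = (\<chi> k. det(\<chi> i j. if j=k then z$i else g$i$j) / det g)"
    using cramer[of g "matrix_inv g *v z" z] assms by simp
  have "det(\<chi> i j. if j=k then z$i else g$i$j) \<in> \<int>" for k
    apply (rule det_int) using z assms(2) unfolding int_mat_def Zd_def by auto
  then show "matrix_inv g *v z \<in> Zd" unfolding e Zd_def using assms by simp
qed

definition Z0 :: "(real,'d::{finite,linorder}) vec set" where
  "Z0 = {z \<in> Zd. z$lastI = 0}"

definition H2 :: "('d::{finite,linorder}) mt set" where
  "H2 = setmul ASL_Z U_grp"

lemma ASL_Z_iff: "g \<in> ASL_Z \<longleftrightarrow> det g = 1 \<and> LP g \<and> int_mat g"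
  unfolding ASL_Z_def ASL_R_iff by auto

lemma mat1_mem: "mat 1 \<in> ASL_R" "mat 1 \<in> ASL_Z" "mat 1 \<in> U_grp" "mat 1 \<in> H2"
proof -
  have l: "LP (mat 1)" unfolding LP_def by simp
  show a: "mat 1 \<in> ASL_R" "mat 1 \<in> ASL_Z" "mat 1 \<in> U_grp" using l
    by (auto simp: ASL_R_iff ASL_Z_iff U_iff det_I int_mat_def) (simp_all add: mat_def)
  show "mat 1 \<in> H2" unfolding H2_def setmul_def using a
    by (auto intro!: exI[of _ "mat 1"])
qed

lemma ASL_R_mul: "a \<in> ASL_R \<Longrightarrow> b \<in> ASL_R \<Longrightarrow> a ** b \<in> ASL_R"
  by (simp add: ASL_R_iff det_mul LP_mul)

lemma ASL_Z_mul: "a \<in> ASL_Z \<Longrightarrow> b \<in> ASL_Z \<Longrightarrow> a ** b \<in> ASL_Z"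
  by (simp add: ASL_Z_iff det_mul LP_mul int_mat_iff flip: matrix_vector_mul_assoc)

lemma ASL_Z_inv: "a \<in> ASL_Z \<Longrightarrow> matrix_inv a \<in> ASL_Z"
  by (simp add: ASL_Z_iff det_inv1 LP_inv inv_int)

lemma U_mul: "a \<in> U_grp \<Longrightarrow> b \<in> U_grp \<Longrightarrow> a ** b \<in> U_grp"
  by (simp add: U_iff det_mul LP_mul flip: matrix_vector_mul_assoc)

lemma U_inv: assumes "u \<in> U_grp" shows "matrix_inv u \<in> U_grp"
proof -
  have d: "det u = 1" "LP u" using assms U_iff by auto
  have "matrix_inv u *v x = x" if "x$lastI = 0" for x
  proof -
    have "u *v x = x" using assms that U_iff by blast
    then have "matrix_inv u *v x = matrix_inv u *v (u *v x)" by simp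
    also have "\<dots> = x" by (simp add: matrix_vector_mul_assoc inv_facts d)
    finally show ?thesis .
  qed
  then show ?thesis using d by (simp add: U_iff det_inv1 LP_inv)
qed

lemma U_conj: assumes "a \<in> ASL_R" "b \<in> ASL_R" "b ** a = mat 1" "u \<in> U_grp"
  shows "b ** u ** a \<in> U_grp"
proof -
  have "(b ** u ** a) *v x = x" if "x$lastI = 0" for x
  proof -
    have "(a *v x)$lastI = 0" using assms(1) that ASL_R_iff LP_def by metis
    then have "u *v (a *v x) = a *v x" using assms(4) U_iff by blast
    then have "(b ** u ** a) *v x = b *v (a *v x)" by (simp flip: matrix_vector_mul_assoc)
    also have "\<dots> = x" by (simp add: matrix_vector_mul_assoc assms(3))
    finally show ?thesis .
  qed
  then show ?thesis using assms by (simp add: U_iff ASL_R_iff det_mul LP_mul)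
qed

lemma H2_mem: "h \<in> H2 \<longleftrightarrow> (\<exists>a u. h = a ** u \<and> a \<in> ASL_Z \<and> u \<in> U_grp)"
  unfolding H2_def setmul_def by auto

lemma ASL_Z_R: "a \<in> ASL_Z \<Longrightarrow> a \<in> ASL_R" unfolding ASL_Z_def by auto
lemma U_R: "a \<in> U_grp \<Longrightarrow> a \<in> ASL_R" unfolding U_grp_def by auto

lemma H2_R: "h \<in> H2 \<Longrightarrow> h \<in> ASL_R"
  using H2_mem ASL_Z_R U_R ASL_R_mul by metis

lemma det1_inv: "a \<in> ASL_R \<Longrightarrow> a ** matrix_inv a = mat 1 \<and> matrix_inv a ** a = mat 1"
  using inv_facts ASL_R_iff by (metis one_neq_zero)

lemma H2_mul: assumes "h \<in> H2" "k \<in> H2" shows "h ** k \<in> H2"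
proof -
  obtain a u where h: "h = a ** u" "a \<in> ASL_Z" "u \<in> U_grp" using assms(1) H2_mem by blast
  obtain a' u' where k: "k = a' ** u'" "a' \<in> ASL_Z" "u' \<in> U_grp" using assms(2) H2_mem by blast
  have ii: "a' ** matrix_inv a' = mat 1" "matrix_inv a' ** a' = mat 1" using det1_inv ASL_Z_R k(2) by auto
  have c: "matrix_inv a' ** u ** a' \<in> U_grp"
    using U_conj[of a' "matrix_inv a'" u] ii h k ASL_Z_R ASL_Z_inv by blast
  have "(a ** a') ** ((matrix_inv a' ** u ** a') ** u') = a ** ((a' ** matrix_inv a') ** (u ** (a' ** u')))"
    by (simp add: matrix_mul_assoc)
  also have "\<dots> = h ** k" using ii h k by (simp add: matrix_mul_assoc)
  finally show ?thesis unfolding H2_mem using ASL_Z_mul h k c U_mul by metis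
qed

lemma H2_inv: assumes "h \<in> H2" shows "\<exists>k\<in>H2. h ** k = mat 1"
proof -
  obtain a u where h: "h = a ** u" "a \<in> ASL_Z" "u \<in> U_grp" using assms(1) H2_mem by blast
  have ii: "a ** matrix_inv a = mat 1" "matrix_inv a ** a = mat 1" using det1_inv ASL_Z_R h(2) by auto
  have iu: "u ** matrix_inv u = mat 1" using det1_inv U_R h(3) by auto
  have c: "a ** matrix_inv u ** matrix_inv a \<in> U_grp"
    using U_conj[of "matrix_inv a" a "matrix_inv u"] ii h ASL_Z_R ASL_Z_inv U_inv by blast
  let ?k = "matrix_inv a ** (a ** matrix_inv u ** matrix_inv a)"
  have "?k \<in> H2" unfolding H2_mem using c ASL_Z_inv h by blast
  moreover have "h ** ?k = mat 1"
  proof -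
    have "h ** ?k = a ** ((u ** ((matrix_inv a ** a) ** matrix_inv u)) ** matrix_inv a)"
      using h by (simp add: matrix_mul_assoc)
    also have "\<dots> = mat 1" using ii iu by simp
    finally show ?thesis .
  qed
  ultimately show ?thesis by blast
qed

lemma H2_coset: fixes h :: "'d::{finite,linorder} mt" assumes "h \<in> H2" shows "lmul h H2 = H2"
proof
  show "lmul h H2 \<subseteq> H2" unfolding lmul_def using assms H2_mul by auto
  show "H2 \<subseteq> lmul h H2"
  proof
    fix k :: "'d mt" assume k: "k \<in> H2"
    obtain hi where hi: "hi \<in> H2" "h ** hi = mat 1" using H2_inv assms by blast
    have "k = h ** (hi ** k)" using hi by (simp add: matrix_mul_assoc)
    then show "k \<in> lmul h H2" unfolding lmul_def using H2_mul hi k by blast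
  qed
qed

lemma ASL_Z_Z0: assumes "a \<in> ASL_Z" "z \<in> Z0" shows "a *v z \<in> Z0"
  using assms unfolding Z0_def ASL_Z_iff int_mat_iff LP_def by auto

lemma ASL_Z_Z0_img: fixes a :: "'d::{finite,linorder} mt" assumes "a \<in> ASL_Z" shows "(\<lambda>z. a *v z) ` Z0 = Z0"
proof
  show "(\<lambda>z. a *v z) ` Z0 \<subseteq> Z0" using ASL_Z_Z0 assms by auto
  show "Z0 \<subseteq> (\<lambda>z. a *v z) ` Z0"
  proof
    fix z :: "(real,'d) vec" assume z: "z \<in> Z0"
    have "z = a *v (matrix_inv a *v z)"
      using det1_inv[OF ASL_Z_R[OF assms]] by (simp add: matrix_vector_mul_assoc)
    then show "z \<in> (\<lambda>z. a *v z) ` Z0" using ASL_Z_Z0[OF ASL_Z_inv[OF assms] z] by blast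
  qed
qed

lemma U_Z0_img: fixes u :: "'d::{finite,linorder} mt" assumes "u \<in> U_grp" shows "(\<lambda>z. u *v z) ` Z0 = Z0"
proof -
  have "u *v z = z" if "z \<in> Z0" for z using that assms unfolding U_iff Z0_def by blast
  then show ?thesis by force
qed

lemma H2_Z0_img: fixes h :: "'d::{finite,linorder} mt" assumes "h \<in> H2" shows "(\<lambda>z. h *v z) ` Z0 = Z0"
proof -
  obtain a u where h: "h = a ** u" "a \<in> ASL_Z" "u \<in> U_grp" using assms(1) H2_mem by blast
  have "(\<lambda>z. h *v z) ` Z0 = (\<lambda>z. a *v z) ` ((\<lambda>z. u *v z) ` Z0)"
    unfolding h image_image by (simp add: matrix_vector_mul_assoc)
  also have "\<dots> = Z0" using U_Z0_img[OF h(3)] ASL_Z_Z0_img[OF h(2)] by simp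
  finally show ?thesis .
qed

lemma mulif: "y * (if P then 1 else 0) = (if P then y else (0::real))" by simp

lemma sum_axis_comp: "(\<Sum>i\<in>{i. i \<noteq> lastI}. c i *\<^sub>R (axis i 1 :: (real,'d::{finite,linorder}) vec))$j
   = (if j = lastI then 0 else c j)"
  by (simp add: sum_component axis_def mulif)

lemma decomp: fixes x :: "(real,'d::{finite,linorder}) vec" assumes "x$lastI = 0"
  shows "x = (\<Sum>i\<in>{i. i \<noteq> lastI}. x$i *\<^sub>R axis i 1)"
  unfolding vec_eq_iff sum_axis_comp using assms by auto

lemma lin_mv: "linear (\<lambda>x. (g::('d::finite) mt) *v x)"
  by (rule matrix_vector_mul_linear)

lemma int_span_img: fixes g :: "'d::{finite,linorder} mt"
  shows "int_span_first g = (\<lambda>z. g *v z) ` Z0"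
proof
  show "int_span_first g \<subseteq> (\<lambda>z. g *v z) ` Z0"
  proof
    fix x assume "x \<in> int_span_first g"
    then obtain c where c: "\<forall>i. c i \<in> \<int>" "x = (\<Sum>i\<in>{i. i \<noteq> lastI}. c i *\<^sub>R (g *v axis i 1))"
      unfolding int_span_first_def by blast
    let ?z = "(\<Sum>i\<in>{i. i \<noteq> lastI}. c i *\<^sub>R (axis i 1 :: (real,'d) vec))"
    have "g *v ?z = x" unfolding c(2)
      by (simp add: linear_sum[OF lin_mv] linear_scale[OF lin_mv])
    moreover have "?z \<in> Z0" unfolding Z0_def Zd_def mem_Collect_eq sum_axis_comp using c(1) by auto
    ultimately show "x \<in> (\<lambda>z. g *v z) ` Z0" by blast
  qed
  show "(\<lambda>z. g *v z) ` Z0 \<subseteq> int_span_first g"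
  proof
    fix x assume "x \<in> (\<lambda>z. g *v z) ` Z0"
    then obtain z where z: "z \<in> Z0" "x = g *v z" by blast
    have "z = (\<Sum>i\<in>{i. i \<noteq> lastI}. z$i *\<^sub>R axis i 1)" using z(1) decomp unfolding Z0_def by blast
    then have "x = (\<Sum>i\<in>{i. i \<noteq> lastI}. z$i *\<^sub>R (g *v axis i 1))" using z(2)
      by (metis (no_types, lifting) linear_scale[OF lin_mv] linear_sum[OF lin_mv] sum.cong)
    moreover have "\<forall>i. z$i \<in> \<int>" using z(1) unfolding Z0_def Zd_def by blast
    ultimately show "x \<in> int_span_first g" unfolding int_span_first_def by blast
  qed
qed

lemma span_V0: "span {axis i 1 | i. i \<noteq> lastI} = {x :: (real,'d::{finite,linorder}) vec. x$lastI = 0}"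
proof
  have "subspace {x :: (real,'d) vec. x$lastI = 0}" unfolding subspace_def by simp
  moreover have "{axis i 1 | i. i \<noteq> lastI} \<subseteq> {x :: (real,'d) vec. x$lastI = 0}" by (auto simp: axis_def)
  ultimately show "span {axis i 1 | i. i \<noteq> lastI} \<subseteq> {x :: (real,'d) vec. x$lastI = 0}"
    by (rule span_minimal[rotated])
  show "{x :: (real,'d) vec. x$lastI = 0} \<subseteq> span {axis i 1 | i. i \<noteq> lastI}"
  proof
    fix x :: "(real,'d) vec" assume "x \<in> {x. x$lastI = 0}"
    then have x: "x = (\<Sum>i\<in>{i. i \<noteq> lastI}. x$i *\<^sub>R axis i 1)" using decomp by blast
    show "x \<in> span {axis i 1 | i. i \<noteq> lastI}"
      by (subst x, intro span_sum span_scale span_base) blast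
  qed
qed

lemma pi_Y: fixes g :: "'d::{finite,linorder} mt" assumes "det g \<noteq> 0"
  shows "pi_cap (Y_of g) = X_of g"
proof -
  have e: "{g *v axis i 1 | i. i \<noteq> lastI} = (\<lambda>x. g *v x) ` {axis i 1 | i. i \<noteq> lastI}" by auto
  have sp: "span {g *v axis i 1 | i. i \<noteq> lastI} = (\<lambda>x. g *v x) ` {x. x$lastI = 0}"
    unfolding e span_linear_image[OF lin_mv] span_V0 ..
  have inj: "inj ((*v) g)" using assms inj_matrix_vector_mult invertible_det_nz by blast
  have "(\<lambda>z. g *v z) ` Zd \<inter> (\<lambda>x. g *v x) ` {x. x$lastI = 0} = (\<lambda>z. g *v z) ` (Zd \<inter> {x. x$lastI = 0})"
    using inj by (simp add: image_Int)
  also have "Zd \<inter> {x. x$lastI = 0} = Z0" unfolding Z0_def by auto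
  finally show ?thesis unfolding pi_cap_def Y_of_def X_of_def sp int_span_img by simp
qed

lemma ed_fix: assumes "B \<in> ASL_R" shows "transpose B *v ed = ed"
proof -
  have r: "B$lastI$j = (if j = lastI then 1 else 0)" for j using assms unfolding ASL_R_def by auto
  show ?thesis unfolding vec_eq_iff
    by (simp add: matrix_vector_mult_def transpose_def ed_def axis_def mulif r)
qed

lemma X_of_right: fixes g :: "'d::{finite,linorder} mt" assumes "det g \<noteq> 0" "h \<in> H2"
  shows "X_of (g ** h) = X_of g"
proof -
  have hR: "h \<in> ASL_R" using H2_R assms(2) by blast
  have dh: "det h = 1" "LP h" using hR ASL_R_iff by auto
  have "(\<lambda>z. (g ** h) *v z) ` Z0 = (\<lambda>z. g *v z) ` ((\<lambda>z. h *v z) ` Z0)"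
    unfolding image_image by (simp add: matrix_vector_mul_assoc)
  then have 1: "int_span_first (g ** h) = int_span_first g"
    unfolding int_span_img using H2_Z0_img[OF assms(2)] by simp
  have ig: "g ** matrix_inv g = mat 1" "matrix_inv g ** g = mat 1" using inv_facts[of g] assms(1) by auto
  have ih: "h ** matrix_inv h = mat 1" "matrix_inv h ** h = mat 1" using inv_facts[of h] dh by auto
  have "(g ** h) ** (matrix_inv h ** matrix_inv g) = mat 1"
    by (simp add: matrix_mul_assoc) (metis ig(1) ih(1) matrix_mul_assoc matrix_mul_lid)
  moreover have "(matrix_inv h ** matrix_inv g) ** (g ** h) = mat 1"
    by (simp add: matrix_mul_assoc) (metis ig(2) ih(2) matrix_mul_assoc matrix_mul_lid)
  ultimately have mi: "matrix_inv (g ** h) = matrix_inv h ** matrix_inv g" by (rule inv_unique)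
  have hiR: "matrix_inv h \<in> ASL_R" unfolding ASL_R_iff using det_inv1[OF dh(1)] LP_inv[of h] dh by simp
  have "tau (g ** h) = transpose (matrix_inv g) *v (transpose (matrix_inv h) *v ed)"
    unfolding tau_def theta_def mi matrix_transpose_mul by (rule matrix_vector_mul_assoc[symmetric])
  also have "\<dots> = tau g" unfolding ed_fix[OF hiR] tau_def theta_def ..
  finally show ?thesis using 1 unfolding X_of_def by simp
qed

lemma space_quot: "space (quot_measure G H) = quot G H"
  unfolding quot_measure_def by (rule space_measure_of) auto

lemma sets_quotI: assumes "A \<subseteq> quot G H" "\<Union>A \<in> sets borel" shows "A \<in> sets (quot_measure G H)"
  unfolding quot_measure_def using assms by (subst sets_measure_of) auto

lemma sets_mYd: "sets (m_Yd :: ('d::{finite,linorder}) mt set measure) = sets (quot_measure ASL_R ASL_Z)"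
  unfolding m_Yd_def
proof (split if_split, intro conjI impI)
  assume "\<exists>\<mu> :: ('d mt) set measure. inv_prob_quot ASL_R ASL_Z \<mu>"
  then show "sets (SOME \<mu> :: ('d mt) set measure. inv_prob_quot ASL_R ASL_Z \<mu>) = sets (quot_measure ASL_R ASL_Z)"
    by (rule someI2_ex) (simp add: inv_prob_quot_def)
next
  show "sets (null_measure (quot_measure ASL_R ASL_Z) :: ('d mt) set measure) = sets (quot_measure ASL_R ASL_Z)" by simp
qed

lemma space_mYd: "space (m_Yd :: ('d::{finite,linorder}) mt set measure) = quot ASL_R ASL_Z"
  using sets_eq_imp_space_eq[OF sets_mYd] space_quot by metis

lemma lmul_assoc: "lmul (x ** h) H = lmul x (lmul h H)"
  unfolding lmul_def image_image by (simp add: matrix_mul_assoc)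

lemma T_coset: "setmul (lmul x A) U_grp = lmul x (setmul A U_grp)"
proof (rule set_eqI, rule iffI)
  fix z assume "z \<in> setmul (lmul x A) U_grp"
  then obtain a u where au: "a \<in> A" "u \<in> U_grp" "z = (x ** a) ** u" unfolding setmul_def lmul_def by blast
  then have "z = x ** (a ** u)" by (simp add: matrix_mul_assoc)
  then show "z \<in> lmul x (setmul A U_grp)" using au(1,2) unfolding setmul_def lmul_def by blast
next
  fix z assume "z \<in> lmul x (setmul A U_grp)"
  then obtain a u where au: "a \<in> A" "u \<in> U_grp" "z = x ** (a ** u)" unfolding setmul_def lmul_def by blast
  then have "z = (x ** a) ** u" by (simp add: matrix_mul_assoc)
  then show "z \<in> setmul (lmul x A) U_grp" using au(1,2) unfolding setmul_def lmul_def by blast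
qed

lemma mem_lmul_self: "x \<in> lmul x H2"
  unfolding lmul_def using mat1_mem(4) by (metis image_eqI matrix_mul_rid)

lemma mem_lmul_self1: "x \<in> lmul x ASL_Z"
  unfolding lmul_def using mat1_mem(2) by (metis image_eqI matrix_mul_rid)

lemma ASL_Z_H2: "a \<in> ASL_Z \<Longrightarrow> a \<in> H2"
  unfolding H2_mem using mat1_mem(3) by (metis matrix_mul_rid)

lemma rep_mem: "x \<in> C \<Longrightarrow> rep C \<in> C"
  unfolding rep_def by (rule someI)

lemma T_meas: "(\<lambda>C. setmul C U_grp) \<in> measurable (m_Yd :: ('d::{finite,linorder}) mt set measure) (quot_measure ASL_R (setmul ASL_Z U_grp))"
proof -
  have "(\<lambda>C. setmul C U_grp) \<in> measurable (quot_measure ASL_R (ASL_Z :: 'd mt set)) (quot_measure ASL_R H2)"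
    unfolding quot_measure_def[of ASL_R H2]
  proof (rule measurable_measure_of)
    show "{A. A \<subseteq> quot ASL_R H2 \<and> \<Union> A \<in> sets borel} \<subseteq> Pow (quot ASL_R H2)" by auto
    show "(\<lambda>C. setmul C U_grp) \<in> space (quot_measure ASL_R ASL_Z) \<rightarrow> quot ASL_R (H2 :: 'd mt set)"
      unfolding space_quot quot_def H2_def by (auto simp: T_coset)
    fix A :: "'d mt set set" assume "A \<in> {A. A \<subseteq> quot ASL_R H2 \<and> \<Union> A \<in> sets borel}"
    then have A: "A \<subseteq> quot ASL_R H2" "\<Union>A \<in> sets borel" by auto
    let ?S = "(\<lambda>C. setmul C U_grp) -` A \<inter> quot ASL_R ASL_Z"
    have "\<Union>?S = \<Union>A"
    proof
      show "\<Union>?S \<subseteq> \<Union>A"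
      proof
        fix y assume "y \<in> \<Union>?S"
        then obtain x where x: "x \<in> ASL_R" "y \<in> lmul x ASL_Z" "lmul x H2 \<in> A"
          unfolding quot_def H2_def by (auto simp: T_coset)
        have "y \<in> lmul x H2" using x(2) ASL_Z_H2 unfolding lmul_def by auto
        then show "y \<in> \<Union>A" using x(3) by blast
      qed
      show "\<Union>A \<subseteq> \<Union>?S"
      proof
        fix y assume "y \<in> \<Union>A"
        then obtain C' where C': "C' \<in> A" "y \<in> C'" by blast
        then obtain x where x: "x \<in> ASL_R" "C' = lmul x H2" using A(1) unfolding quot_def by auto
        then obtain h where h: "h \<in> H2" "y = x ** h" using C' unfolding lmul_def by auto
        have yR: "y \<in> ASL_R" using h x ASL_R_mul H2_R by blast
        have "lmul y H2 = C'" unfolding h(2) lmul_assoc H2_coset[OF h(1)] x(2) ..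
        then have "lmul y ASL_Z \<in> ?S" using yR C'(1) unfolding quot_def H2_def by (auto simp: T_coset)
        then show "y \<in> \<Union>?S" using mem_lmul_self1 by blast
      qed
    qed
    then show "(\<lambda>C. setmul C U_grp) -` A \<inter> space (quot_measure ASL_R ASL_Z) \<in> sets (quot_measure ASL_R ASL_Z)"
      unfolding space_quot using A(2) by (intro sets_quotI) auto
  qed
  then show ?thesis unfolding H2_def using measurable_cong_sets[OF sets_mYd refl] by blast
qed

lemma ASL_R_borel: "(ASL_R :: ('d::{finite,linorder}) mt set) \<in> sets borel"
proof -
  have c: "continuous_on UNIV (\<lambda>g::'d mt. g$i$j)" for i j
    by (intro linear_continuous_on bounded_linear_compose[OF bounded_linear_vec_nth bounded_linear_vec_nth])
  have 1: "closed {g :: 'd mt. det g = 1}"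
    by (rule closed_Collect_eq[OF cont_det continuous_on_const])
  have "closed {g :: 'd mt. g$lastI$j = (if j = lastI then 1 else 0)}" for j
    by (rule closed_Collect_eq[OF c continuous_on_const])
  then have 2: "closed {g :: 'd mt. \<forall>j. g$lastI$j = (if j = lastI then 1 else 0)}"
    by (rule closed_Collect_all)
  have e: "(ASL_R :: 'd mt set) = {g :: 'd mt. det g = 1} \<inter> {g :: 'd mt. \<forall>j. g$lastI$j = (if j = lastI then 1 else 0)}"
    unfolding ASL_R_def by blast
  have "closed (ASL_R :: 'd mt set)" unfolding e using 1 2 by (rule closed_Int)
  then show ?thesis by (rule borel_closed)
qed

lemma gv_det: fixes v :: "(real,'d::{finite,linorder}) vec" shows "det (gv v) = 1"
proof (cases "\<exists>g. det g = 1 \<and> tau g = v")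
  case True
  then have "det (SOME g. det g = 1 \<and> tau g = v) = 1" by (rule someI2_ex) auto
  then show ?thesis unfolding gv_def using True by simp
next
  case False
  then show ?thesis unfolding gv_def by auto
qed

lemma Xc: fixes G :: "'d::{finite,linorder} mt"
  assumes "det G = 1" "x \<in> ASL_R" "y \<in> lmul x H2"
  shows "X_of (G ** y) = X_of (G ** x)"
proof -
  obtain h where h: "h \<in> H2" "y = x ** h" using assms(3) unfolding lmul_def by auto
  have "det (G ** x) \<noteq> 0" using assms(1,2) by (simp add: det_mul ASL_R_iff)
  then show ?thesis unfolding h(2) matrix_mul_assoc using X_of_right h(1) by blast
qed

lemma F_meas: fixes G :: "'d::{finite,linorder} mt" and f :: "(real,'d) vec set \<times> (real,'d) vec \<Rightarrow> ennreal"
  assumes hf: "(\<lambda>g. f (X_of g)) \<in> borel_measurable (restrict_space borel SLd)" and dG: "det G = 1"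
  shows "(\<lambda>C. f (X_of (G ** rep C))) \<in> borel_measurable (quot_measure ASL_R H2)"
proof (rule measurableI)
  fix x show "f (X_of (G ** rep x)) \<in> space borel" by simp
next
  fix B :: "ennreal set" assume B: "B \<in> sets borel"
  let ?W = "{y \<in> ASL_R. f (X_of (G ** y)) \<in> B}"
  have m1: "(\<lambda>y. G ** y) \<in> measurable (restrict_space borel ASL_R) (restrict_space borel SLd)"
    by (rule measurable_restrict_space3[OF borel_measurable_continuous_onI[OF lin_mul]])
      (auto simp: ASL_R_iff SLd_def det_mul dG)
  have m2: "(\<lambda>y. f (X_of (G ** y))) \<in> borel_measurable (restrict_space borel ASL_R)"
    using measurable_comp[OF m1 hf] by (simp add: o_def)
  have "(\<lambda>y. f (X_of (G ** y))) -` B \<inter> space (restrict_space borel ASL_R) \<in> sets (restrict_space borel ASL_R)"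
    using measurable_sets[OF m2 B] .
  moreover have "(\<lambda>y. f (X_of (G ** y))) -` B \<inter> space (restrict_space borel ASL_R) = ?W"
    by (auto simp: space_restrict_space)
  ultimately have W0: "?W \<in> sets (restrict_space borel ASL_R)" by simp
  have "ASL_R \<inter> space borel \<in> sets (borel :: 'd mt measure)" using ASL_R_borel by simp
  then have W: "?W \<in> sets borel" using sets_restrict_space_iff W0 by blast
  let ?S = "(\<lambda>C. f (X_of (G ** rep C))) -` B \<inter> quot ASL_R H2"
  have "\<Union>?S = ?W"
  proof
    show "\<Union>?S \<subseteq> ?W"
    proof
      fix y assume "y \<in> \<Union>?S"
      then obtain x where x: "x \<in> ASL_R" "y \<in> lmul x H2" "f (X_of (G ** rep (lmul x H2))) \<in> B"
        unfolding quot_def by auto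
      have "rep (lmul x H2) \<in> lmul x H2" by (rule rep_mem[OF mem_lmul_self])
      then have "X_of (G ** rep (lmul x H2)) = X_of (G ** y)" using Xc[OF dG x(1)] x(2) by metis
      moreover have "y \<in> ASL_R" using x(1,2) H2_R ASL_R_mul unfolding lmul_def by auto
      ultimately show "y \<in> ?W" using x(3) by auto
    qed
    show "?W \<subseteq> \<Union>?S"
    proof
      fix y assume y: "y \<in> ?W"
      have "rep (lmul y H2) \<in> lmul y H2" by (rule rep_mem[OF mem_lmul_self])
      then have "X_of (G ** rep (lmul y H2)) = X_of (G ** y)" using Xc[OF dG] y by blast
      then have "lmul y H2 \<in> ?S" using y unfolding quot_def by auto
      then show "y \<in> \<Union>?S" using mem_lmul_self by blast
    qed
  qed
  then show "(\<lambda>C. f (X_of (G ** rep C))) -` B \<inter> space (quot_measure ASL_R H2) \<in> sets (quot_measure ASL_R H2)"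
    unfolding space_quot using W by (intro sets_quotI) auto
qed

theorem lemma4p6:
  fixes M :: "((real, 'd::{finite,linorder}) vec, 'd) vec"
  assumes "CARD('d) \<ge> 4"
    and "int_mat M" and "transpose M = M" and "det M \<noteq> 0"
    and "QF M ed > 0"
    and "compact {h \<in> SO_R M. h *v ed = ed}"
  shows "\<forall>f :: ((real, 'd) vec) set \<times> (real, 'd) vec \<Rightarrow> ennreal.
           (\<lambda>g. f (X_of g)) \<in> borel_measurable (restrict_space borel SLd) \<longrightarrow>
           mu_Y M (\<lambda>y. f (pi_cap y)) = mu_X M f"
proof (intro allI impI)
  fix f :: "((real, 'd) vec) set \<times> (real, 'd) vec \<Rightarrow> ennreal"
  assume hf: "(\<lambda>g. f (X_of g)) \<in> borel_measurable (restrict_space borel SLd)"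
  show "mu_Y M (\<lambda>y. f (pi_cap y)) = mu_X M f"
    unfolding mu_Y_def mu_X_def
  proof (rule nn_integral_cong)
    fix v :: "(real,'d) vec"
    let ?G = "gv v"
    have dG: "det ?G = 1" by (rule gv_det)
    have Fm: "(\<lambda>C. f (X_of (?G ** rep C))) \<in> borel_measurable
        (distr (m_Yd :: 'd mt set measure) (quot_measure ASL_R (setmul ASL_Z U_grp)) (\<lambda>C. setmul C U_grp))"
      using F_meas[OF hf dG] unfolding H2_def
      by (subst measurable_cong_sets[OF sets_distr refl])
    have "(\<integral>\<^sup>+ C. f (X_of (?G ** rep C)) \<partial>(m_Xd :: 'd mt set measure))
        = (\<integral>\<^sup>+ C. f (X_of (?G ** rep (setmul C U_grp))) \<partial>(m_Yd :: 'd mt set measure))"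
      unfolding m_Xd_def by (rule nn_integral_distr[OF T_meas Fm])
    also have "\<dots> = (\<integral>\<^sup>+ C. f (pi_cap (Y_of (?G ** rep C))) \<partial>(m_Yd :: 'd mt set measure))"
    proof (rule nn_integral_cong)
      fix C :: "'d mt set" assume "C \<in> space m_Yd"
      then obtain x where x: "x \<in> ASL_R" "C = lmul x ASL_Z" unfolding space_mYd quot_def by auto
      have TC: "setmul C U_grp = lmul x H2" unfolding x(2) T_coset H2_def ..
      have r1: "rep (lmul x H2) \<in> lmul x H2" by (rule rep_mem[OF mem_lmul_self])
      have r2: "rep C \<in> C" unfolding x(2) by (rule rep_mem[OF mem_lmul_self1])
      then obtain a where a: "a \<in> ASL_Z" "rep C = x ** a" unfolding x(2) lmul_def by auto
      have r2': "rep C \<in> lmul x H2" using a ASL_Z_H2 unfolding lmul_def by auto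
      have "det a = 1" using a(1) ASL_Z_iff by blast
      then have "det (?G ** rep C) \<noteq> 0" using dG x(1) a(2)
        by (simp add: det_mul ASL_R_iff)
      then have "pi_cap (Y_of (?G ** rep C)) = X_of (?G ** rep C)" by (rule pi_Y)
      also have "\<dots> = X_of (?G ** x)" using Xc[OF dG x(1) r2'] .
      also have "\<dots> = X_of (?G ** rep (setmul C U_grp))" unfolding TC using Xc[OF dG x(1) r1] by simp
      finally show "f (X_of (?G ** rep (setmul C U_grp))) = f (pi_cap (Y_of (?G ** rep C)))" by simp
    qed
    finally show "(\<integral>\<^sup>+ C. f (pi_cap (Y_of (?G ** rep C))) \<partial>m_Yd) = (\<integral>\<^sup>+ C. f (X_of (?G ** rep C)) \<partial>m_Xd)"
      by simp
  qed
qed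

end
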